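(* Assume (A1). Let $g:\Gamma\to\mathbb R$ and let $u$ be the solution of problem (P) with boundary data $g$. Fix $x\in\mathcal X$ and define the stochastic process $X_0,X_1,X_2,\dots$ on $\mathcal X$ as follows: $X_0=x$; given $X_i$, if $X_i\in\Gamma$ set $X_{i+1}=X_i$; if $X_i\notin\Gamma$, choose $X_{i+1}$ (independently of everything else) by: with probability $\alpha$, $X_{i+1}=y$ with probability $w_{X_i y}/d_{X_i}$ (a random walk step); with probability $\frac12(1-\alpha)$, $X_{i+1}$ is a point of $\operatorname{argmax}_{y\in N_{X_i}}u(y)$; with probability $\frac12(1-\alpha)$, $X_{i+1}$ is a point of $\operatorname{argmin}_{y\in N_{X_i}\cap\Gamma}g(y)$ (ties broken by any fixed rule). Then $Z_i=u(X_i)$ is a sub-martingale with respect to $(X_i)$, i.e. $\mathbb E[Z_{i+1}\mid X_i]\ge Z_i$ for all $i\ge0$.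
   Context: $\mathcal X$ is a finite vertex set and $W=(w_{xy})$ a symmetric matrix of nonnegative weights defining a connected graph, with degrees $d_x=\sum_{y}w_{xy}$ and neighbor sets $N_x=\{y\in\mathcal X:w_{xy}>0\}$. For $p\ge2$, $\alpha=1/(p-1)$, and $$\mathcal L_p u(x)=\alpha\,\frac{1}{d_x}\sum_{y}w_{xy}\big(u(x)-u(y)\big)+(1-\alpha)\Big(u(x)-\tfrac12\big(\max_{N_x}u+\min_{N_x}u\big)\Big).$$ $\Gamma\subset\mathcal X$ is the set of labeled vertices. Problem (P): find $u:\mathcal X\to\mathbb R$ with $\mathcal L_pu(x)=0$ for $x\in\mathcal X\setminus\Gamma$ and $u=g$ on $\Gamma$; since the graph is connected it has a unique solution. Assumption (A1): $\Gamma\cap N_x\neq\varnothing$ for every $x\in\mathcal X$. *)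

theory Defs
  imports "HOL-Probability.Probability"
begin

definition deg :: "('a::finite \<Rightarrow> 'a \<Rightarrow> real) \<Rightarrow> 'a \<Rightarrow> real" where
  "deg w x = (\<Sum>y\<in>UNIV. w x y)"

definition nbhd :: "('a \<Rightarrow> 'a \<Rightarrow> real) \<Rightarrow> 'a \<Rightarrow> 'a set" where
  "nbhd w x = {y. w x y > 0}"

definition connected_graph :: "('a \<Rightarrow> 'a \<Rightarrow> real) \<Rightarrow> bool" where
  "connected_graph w \<longleftrightarrow> (\<forall>x y. (x, y) \<in> {(a, b). w a b > 0}\<^sup>*)"

definition Lp :: "('a::finite \<Rightarrow> 'a \<Rightarrow> real) \<Rightarrow> real \<Rightarrow> ('a \<Rightarrow> real) \<Rightarrow> 'a \<Rightarrow> real" where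
  "Lp w p u x =
     (let \<alpha> = 1 / (p - 1) in
      \<alpha> * ((1 / deg w x) * (\<Sum>y\<in>UNIV. w x y * (u x - u y)))
      + (1 - \<alpha>) * (u x - (Max (u ` nbhd w x) + Min (u ` nbhd w x)) / 2))"

definition rw_step :: "('a::finite \<Rightarrow> 'a \<Rightarrow> real) \<Rightarrow> 'a \<Rightarrow> 'a pmf" where
  "rw_step w z = embed_pmf (\<lambda>y. w z y / deg w z)"

definition trans_pmf ::
  "('a::finite \<Rightarrow> 'a \<Rightarrow> real) \<Rightarrow> real \<Rightarrow> 'a set \<Rightarrow> ('a \<Rightarrow> 'a) \<Rightarrow> ('a \<Rightarrow> 'a) \<Rightarrow> 'a \<Rightarrow> 'a pmf" where
  "trans_pmf w p \<Gamma> ymax ymin z =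
     (if z \<in> \<Gamma> then return_pmf z
      else do {
        c \<leftarrow> bernoulli_pmf (1 / (p - 1));
        if c then rw_step w z
        else do {
          b \<leftarrow> bernoulli_pmf (1/2);
          return_pmf (if b then ymax z else ymin z)
        }
      })"

definition chain_dist :: "('a \<Rightarrow> 'a pmf) \<Rightarrow> 'a \<Rightarrow> nat \<Rightarrow> 'a pmf" where
  "chain_dist K x i = ((\<lambda>\<mu>. bind_pmf \<mu> K) ^^ i) (return_pmf x)"

definition chain_pair :: "('a \<Rightarrow> 'a pmf) \<Rightarrow> 'a \<Rightarrow> nat \<Rightarrow> ('a \<times> 'a) pmf" where
  "chain_pair K x i = bind_pmf (chain_dist K x i) (\<lambda>a. map_pmf (\<lambda>b. (a, b)) (K a))"

end

theory Submission
  imports Defs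
begin

lemma cond_pair_lemma:
  fixes D :: "'a pmf" and K :: "'a \<Rightarrow> 'b pmf"
  assumes z: "z \<in> set_pmf D"
  shows "cond_pmf (bind_pmf D (\<lambda>a. map_pmf (\<lambda>b. (a, b)) (K a))) {q. fst q = z}
         = map_pmf (\<lambda>b. (z, b)) (K z)"
proof -
  define P where "P = bind_pmf D (\<lambda>a. map_pmf (\<lambda>b. (a, b)) (K a))"
  obtain b0 where b0: "b0 \<in> set_pmf (K z)" by (meson all_not_in_conv set_pmf_not_empty)
  have ne: "set_pmf P \<inter> {q. fst q = z} \<noteq> {}"
  proof -
    have "(z, b0) \<in> set_pmf P" using z b0 unfolding P_def by auto
    then show ?thesis by auto
  qed
  have mfst: "map_pmf fst P = D"
    unfolding P_def by (simp add: map_bind_pmf pmf.map_comp o_def map_pmf_const bind_return_pmf')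
  have meas: "measure P {q. fst q = z} = pmf D z"
  proof -
    have "measure P {q. fst q = z} = measure (map_pmf fst P) {z}"
      by (simp add: measure_map_pmf vimage_def)
    then show ?thesis using mfst by (simp add: measure_pmf_single)
  qed
  have pz: "pmf D z > 0" using z by (simp add: pmf_positive)
  have pP: "pmf P (a, b) = pmf D a * pmf (K a) b" for a b
  proof -
    have "pmf P (a, b) = (\<integral>x. pmf (map_pmf (\<lambda>b. (x, b)) (K x)) (a, b) \<partial>measure_pmf D)"
      unfolding P_def by (rule pmf_bind)
    also have "\<dots> = (\<Sum>x\<in>{a}. pmf (map_pmf (\<lambda>b. (x, b)) (K x)) (a, b) * pmf D x)"
    proof (rule integral_measure_pmf_real)
      fix x assume "x \<in> set_pmf D" "pmf (map_pmf (\<lambda>b. (x, b)) (K x)) (a, b) \<noteq> 0"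
      then have "(a, b) \<in> set_pmf (map_pmf (\<lambda>b. (x, b)) (K x))" by (metis pmf_eq_0_set_pmf)
      then show "x \<in> {a}" by auto
    qed simp
    also have "\<dots> = pmf (K a) b * pmf D a"
      using pmf_map_inj'[of "\<lambda>b. (a, b)" "K a" b] by (simp add: inj_def)
    finally show ?thesis by simp
  qed
  show ?thesis
    unfolding P_def[symmetric]
  proof (rule pmf_eqI)
    fix q :: "'a \<times> 'b"
    obtain a b where q: "q = (a, b)" by (cases q)
    show "pmf (cond_pmf P {q. fst q = z}) q = pmf (map_pmf (\<lambda>b. (z, b)) (K z)) q"
    proof (cases "a = z")
      case True
      then show ?thesis using pmf_cond[OF ne] meas pP pz q
          pmf_map_inj'[of "\<lambda>b. (z, b)" "K z" b] by (simp add: inj_def)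
    next
      case False
      have "q \<notin> set_pmf (map_pmf (\<lambda>b. (z, b)) (K z))" using False q by auto
      then have "pmf (map_pmf (\<lambda>b. (z, b)) (K z)) q = 0" by (metis pmf_eq_0_set_pmf)
      then show ?thesis using pmf_cond[OF ne] False q by simp
    qed
  qed
qed

theorem mainTheorem2:
  fixes w :: "'a::finite \<Rightarrow> 'a \<Rightarrow> real"
    and p :: real and \<Gamma> :: "'a set" and g u :: "'a \<Rightarrow> real"
    and ymax ymin :: "'a \<Rightarrow> 'a" and x :: 'a
  assumes sym: "\<And>a b. w a b = w b a"
    and nonneg: "\<And>a b. w a b \<ge> 0"
    and conn: "connected_graph w"
    and p: "p \<ge> 2"
    and A1: "\<And>z. \<Gamma> \<inter> nbhd w z \<noteq> {}"
    and solP_int: "\<And>z. z \<notin> \<Gamma> \<Longrightarrow> Lp w p u z = 0"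
    and solP_bdry: "\<And>z. z \<in> \<Gamma> \<Longrightarrow> u z = g z"
    and ymax: "\<And>z. z \<notin> \<Gamma> \<Longrightarrow> ymax z \<in> nbhd w z \<and> u (ymax z) = Max (u ` nbhd w z)"
    and ymin: "\<And>z. z \<notin> \<Gamma> \<Longrightarrow> ymin z \<in> nbhd w z \<inter> \<Gamma> \<and> g (ymin z) = Min (g ` (nbhd w z \<inter> \<Gamma>))"
  shows "\<forall>i z. z \<in> set_pmf (chain_dist (trans_pmf w p \<Gamma> ymax ymin) x i) \<longrightarrow>
           measure_pmf.expectation
             (cond_pmf (chain_pair (trans_pmf w p \<Gamma> ymax ymin) x i) {q. fst q = z})
             (\<lambda>q. u (snd q)) \<ge> u z"
proof (intro allI impI)
  fix i z
  assume zin: "z \<in> set_pmf (chain_dist (trans_pmf w p \<Gamma> ymax ymin) x i)"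
  let ?K = "trans_pmf w p \<Gamma> ymax ymin"
  have red: "measure_pmf.expectation (cond_pmf (chain_pair ?K x i) {q. fst q = z}) (\<lambda>q. u (snd q))
      = measure_pmf.expectation (?K z) u"
    unfolding chain_pair_def by (simp add: cond_pair_lemma[OF zin])
  have step: "measure_pmf.expectation (?K z) u \<ge> u z"
  proof (cases "z \<in> \<Gamma>")
    case True
    then show ?thesis by (simp add: trans_pmf_def)
  next
    case False
    define \<alpha> where "\<alpha> = 1 / (p - 1)"
    have a0: "0 \<le> \<alpha>" "\<alpha> \<le> 1" using p by (auto simp: \<alpha>_def field_simps)
    define d where "d = deg w z"
    obtain y0 where y0: "w z y0 > 0" using A1[of z] by (auto simp: nbhd_def)
    have dpos: "d > 0"
    proof -
      have "w z y0 \<le> (\<Sum>y\<in>UNIV. w z y)"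
        by (rule member_le_sum) (auto simp: nonneg)
      then show ?thesis using y0 by (simp add: d_def deg_def)
    qed
    have nn: "\<And>y. 0 \<le> w z y / d" using nonneg dpos by simp
    have sum1: "(\<Sum>y\<in>UNIV. w z y / d) = 1"
      using dpos by (simp add: sum_divide_distrib[symmetric] d_def deg_def)
    have prob: "(\<integral>\<^sup>+y. ennreal (w z y / d) \<partial>count_space UNIV) = 1"
      using sum1 nn by (simp add: nn_integral_count_space_finite sum_ennreal)
    have pmfrw: "pmf (rw_step w z) y = w z y / d" for y
      unfolding rw_step_def d_def[symmetric] using pmf_embed_pmf[OF nn prob] by simp
    have Erw: "measure_pmf.expectation (rw_step w z) u = (\<Sum>y\<in>UNIV. u y * (w z y / d))"
      by (subst integral_measure_pmf_real[of UNIV]) (auto simp: pmfrw)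
    have Eb: "measure_pmf.expectation
        (bernoulli_pmf (1/2) \<bind> (\<lambda>b. return_pmf (if b then ymax z else ymin z))) u
        = (u (ymax z) + u (ymin z)) / 2"
      by (subst pmf_expectation_bind[of UNIV]) (auto simp: UNIV_bool)
    have E: "measure_pmf.expectation (?K z) u
        = \<alpha> * (\<Sum>y\<in>UNIV. u y * (w z y / d)) + (1 - \<alpha>) * ((u (ymax z) + u (ymin z)) / 2)"
      using False a0
      apply (simp add: trans_pmf_def \<alpha>_def[symmetric])
      apply (subst pmf_expectation_bind[of UNIV])
      by (auto simp: UNIV_bool Erw Eb[unfolded] algebra_simps)
    have fin: "finite (nbhd w z)" by simp
    have mn: "Min (u ` nbhd w z) \<le> u (ymin z)"
      using ymin[OF False] fin by auto
    have L: "Lp w p u z = 0" using solP_int[OF False] .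
    have avg: "(1 / d) * (\<Sum>y\<in>UNIV. w z y * (u z - u y)) = u z - (\<Sum>y\<in>UNIV. u y * (w z y / d))"
    proof -
      have "(1 / d) * (\<Sum>y\<in>UNIV. w z y * (u z - u y))
          = u z * (\<Sum>y\<in>UNIV. w z y / d) - (\<Sum>y\<in>UNIV. u y * (w z y / d))"
        by (simp add: sum_distrib_left sum_subtractf algebra_simps sum_divide_distrib)
      then show ?thesis using sum1 by simp
    qed
    have uz: "u z = \<alpha> * (\<Sum>y\<in>UNIV. u y * (w z y / d))
        + (1 - \<alpha>) * ((Max (u ` nbhd w z) + Min (u ` nbhd w z)) / 2)"
      using L unfolding Lp_def Let_def \<alpha>_def[symmetric] d_def[symmetric] avg
      by (simp add: algebra_simps)
    have "(1 - \<alpha>) * ((Max (u ` nbhd w z) + Min (u ` nbhd w z)) / 2)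
        \<le> (1 - \<alpha>) * ((u (ymax z) + u (ymin z)) / 2)"
      using a0 mn ymax[OF False] by (intro mult_left_mono) auto
    then show ?thesis using E uz by linarith
  qed
  show "measure_pmf.expectation (cond_pmf (chain_pair ?K x i) {q. fst q = z}) (\<lambda>q. u (snd q)) \<ge> u z"
    using red step by simp
qed

end
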